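(* In the setting described in the context, for every $K\in\mathbb{N}$, $\mathcal{L}^K_\phi\ge\mathcal{L}^{K+1}_\phi$, where for $k\in\mathbb{N}$ $$\mathcal{L}^k_\phi=\mathbb{E}_{q^k_\phi(\tau)}\left[\sum_{t=0}^{k-1}\gamma^t\Big((1-\gamma)\log r(s_t,a_t)+\log e_\phi(z_{t+1}\mid s_{t+1})-\log m_\phi(z_{t+1}\mid z_t,a_t)\Big)+\gamma^k\log Q(s_k,a_k)\right].$$
   Context: An MDP has states $s$, actions $a$, initial state distribution $p_0(s)$, transition density $p(s_{t+1}\mid s_t,a_t)$, a nonnegative reward function $r(s,a)\ge 0$, and discount $\gamma\in[0,1)$ (convention $\log 0=-\infty$). An encoder $e_\phi(z\mid s)$ (conditional density over representations), a latent-space model $m_\phi(z_{t+1}\mid z_t,a_t)$ (conditional density), and a latent policy $\pi_\phi(a\mid z)$ are given. Trajectories are $\tau=(s_0,a_0,z_0,s_1,a_1,z_1,\dots)$, with true distribution $p_\phi(\tau)=p_0(s_0)\prod_{t\ge0}p(s_{t+1}\mid s_t,a_t)\pi_\phi(a_t\mid z_t)e_\phi(z_t\mid s_t)$. The Q-function is $Q(s,a)=\mathbb{E}_{p_\phi}[(1-\gamma)\sum_{t\ge0}\gamma^t r(s_t,a_t)\mid s_0=s,a_0=a]$. For $k\in\mathbb{N}$, $q^k_\phi(\tau)=p_0(s_0)e_\phi(z_0\mid s_0)\pi_\phi(a_0\mid z_0)\prod_{t=1}^k p(s_t\mid s_{t-1},a_{t-1})m_\phi(z_t\mid z_{t-1},a_{t-1})\pi_\phi(a_t\mid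 z_t)$. *)

theory Defs
  imports "HOL-Probability.Probability"
begin

text \<open>A finite trajectory prefix of horizon k is a function
  omega :: nat => state * action * latent on {0..k}, omega t = (s_t, a_t, z_t).\<close>

definition trS :: "(nat \<Rightarrow> 's \<times> 'a \<times> 'z) \<Rightarrow> nat \<Rightarrow> 's" where
  "trS \<omega> t = fst (\<omega> t)"
definition trA :: "(nat \<Rightarrow> 's \<times> 'a \<times> 'z) \<Rightarrow> nat \<Rightarrow> 'a" where
  "trA \<omega> t = fst (snd (\<omega> t))"
definition trZ :: "(nat \<Rightarrow> 's \<times> 'a \<times> 'z) \<Rightarrow> nat \<Rightarrow> 'z" where
  "trZ \<omega> t = snd (snd (\<omega> t))"

text \<open>Density of q^k_phi w.r.t. the product base measure on {0..k}.
  Conventions: p s a s' = p(s'|s,a), e s z = e(z|s), m z a z' = m(z'|z,a),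
  pol z a = pi(a|z).\<close>
definition q_dens ::
  "('s \<Rightarrow> real) \<Rightarrow> ('s \<Rightarrow> 'a \<Rightarrow> 's \<Rightarrow> real) \<Rightarrow> ('s \<Rightarrow> 'z \<Rightarrow> real)
   \<Rightarrow> ('z \<Rightarrow> 'a \<Rightarrow> 'z \<Rightarrow> real) \<Rightarrow> ('z \<Rightarrow> 'a \<Rightarrow> real) \<Rightarrow> nat
   \<Rightarrow> (nat \<Rightarrow> 's \<times> 'a \<times> 'z) \<Rightarrow> real" where
  "q_dens p0 p e m pol k \<omega> =
     p0 (trS \<omega> 0) * e (trS \<omega> 0) (trZ \<omega> 0) * pol (trZ \<omega> 0) (trA \<omega> 0) *
     (\<Prod>t\<in>{1..k}. p (trS \<omega> (t-1)) (trA \<omega> (t-1)) (trS \<omega> t)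
                  * m (trZ \<omega> (t-1)) (trA \<omega> (t-1)) (trZ \<omega> t)
                  * pol (trZ \<omega> t) (trA \<omega> t))"

definition q_traj ::
  "'s measure \<Rightarrow> 'a measure \<Rightarrow> 'z measure \<Rightarrow>
   ('s \<Rightarrow> real) \<Rightarrow> ('s \<Rightarrow> 'a \<Rightarrow> 's \<Rightarrow> real) \<Rightarrow> ('s \<Rightarrow> 'z \<Rightarrow> real)
   \<Rightarrow> ('z \<Rightarrow> 'a \<Rightarrow> 'z \<Rightarrow> real) \<Rightarrow> ('z \<Rightarrow> 'a \<Rightarrow> real) \<Rightarrow> nat
   \<Rightarrow> (nat \<Rightarrow> 's \<times> 'a \<times> 'z) measure" where
  "q_traj Ms Ma Mz p0 p e m pol k =
     density (\<Pi>\<^sub>M t\<in>{0..k}. Ms \<Otimes>\<^sub>M Ma \<Otimes>\<^sub>M Mz)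
             (\<lambda>\<omega>. ennreal (q_dens p0 p e m pol k \<omega>))"

text \<open>True dynamics p_phi conditioned on s_0 = s, a_0 = a, for times 1..n:
  density of (s_t, a_t, z_t)_{t=1..n} given (s_0,a_0) = (s,a).\<close>
definition cS :: "'s \<Rightarrow> (nat \<Rightarrow> 's \<times> 'a \<times> 'z) \<Rightarrow> nat \<Rightarrow> 's" where
  "cS s \<omega> t = (if t = 0 then s else trS \<omega> t)"
definition cA :: "'a \<Rightarrow> (nat \<Rightarrow> 's \<times> 'a \<times> 'z) \<Rightarrow> nat \<Rightarrow> 'a" where
  "cA a \<omega> t = (if t = 0 then a else trA \<omega> t)"

definition p_cond_dens ::
  "('s \<Rightarrow> 'a \<Rightarrow> 's \<Rightarrow> real) \<Rightarrow> ('s \<Rightarrow> 'z \<Rightarrow> real) \<Rightarrow> ('z \<Rightarrow> 'a \<Rightarrow> real)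
   \<Rightarrow> 's \<Rightarrow> 'a \<Rightarrow> nat \<Rightarrow> (nat \<Rightarrow> 's \<times> 'a \<times> 'z) \<Rightarrow> real" where
  "p_cond_dens p e pol s a n \<omega> =
     (\<Prod>t\<in>{1..n}. p (cS s \<omega> (t-1)) (cA a \<omega> (t-1)) (trS \<omega> t)
                  * e (trS \<omega> t) (trZ \<omega> t) * pol (trZ \<omega> t) (trA \<omega> t))"

definition p_cond ::
  "'s measure \<Rightarrow> 'a measure \<Rightarrow> 'z measure \<Rightarrow>
   ('s \<Rightarrow> 'a \<Rightarrow> 's \<Rightarrow> real) \<Rightarrow> ('s \<Rightarrow> 'z \<Rightarrow> real) \<Rightarrow> ('z \<Rightarrow> 'a \<Rightarrow> real)
   \<Rightarrow> 's \<Rightarrow> 'a \<Rightarrow> nat \<Rightarrow> (nat \<Rightarrow> 's \<times> 'a \<times> 'z) measure" where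
  "p_cond Ms Ma Mz p e pol s a n =
     density (\<Pi>\<^sub>M t\<in>{1..n}. Ms \<Otimes>\<^sub>M Ma \<Otimes>\<^sub>M Mz)
             (\<lambda>\<omega>. ennreal (p_cond_dens p e pol s a n \<omega>))"

text \<open>Q(s,a) = E[(1-gamma) sum_t gamma^t r(s_t,a_t) | s_0=s, a_0=a], computed
  (Tonelli, nonnegative rewards) as (1-gamma) sum_t gamma^t E[r(s_t,a_t) | s_0=s,a_0=a];
  values in [0,\<infinity>].\<close>
definition Qfun ::
  "'s measure \<Rightarrow> 'a measure \<Rightarrow> 'z measure \<Rightarrow>
   ('s \<Rightarrow> 'a \<Rightarrow> 's \<Rightarrow> real) \<Rightarrow> ('s \<Rightarrow> 'z \<Rightarrow> real) \<Rightarrow> ('z \<Rightarrow> 'a \<Rightarrow> real)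
   \<Rightarrow> ('s \<Rightarrow> 'a \<Rightarrow> real) \<Rightarrow> real \<Rightarrow> 's \<Rightarrow> 'a \<Rightarrow> ennreal" where
  "Qfun Ms Ma Mz p e pol r \<gamma> s a =
     ennreal (1 - \<gamma>) *
     (\<Sum>t. ennreal (\<gamma> ^ t) *
        (\<integral>\<^sup>+ \<omega>. ennreal (r (cS s \<omega> t) (cA a \<omega> t)) \<partial>p_cond Ms Ma Mz p e pol s a t))"

text \<open>Integrand of L^k (on the event where every logarithm is finite).\<close>
definition L_integrand ::
  "('s \<Rightarrow> 'a \<Rightarrow> ennreal) \<Rightarrow> ('s \<Rightarrow> 'z \<Rightarrow> real) \<Rightarrow> ('z \<Rightarrow> 'a \<Rightarrow> 'z \<Rightarrow> real)
   \<Rightarrow> ('s \<Rightarrow> 'a \<Rightarrow> real) \<Rightarrow> real \<Rightarrow> nat \<Rightarrow> (nat \<Rightarrow> 's \<times> 'a \<times> 'z) \<Rightarrow> real" where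
  "L_integrand Q e m r \<gamma> k \<omega> =
     (\<Sum>t<k. \<gamma> ^ t * ((1 - \<gamma>) * ln (r (trS \<omega> t) (trA \<omega> t))
                      + ln (e (trS \<omega> (Suc t)) (trZ \<omega> (Suc t)))
                      - ln (m (trZ \<omega> t) (trA \<omega> t) (trZ \<omega> (Suc t)))))
     + \<gamma> ^ k * ln (enn2real (Q (trS \<omega> k) (trA \<omega> k)))"

definition L_finite ::
  "(nat \<Rightarrow> 's \<times> 'a \<times> 'z) measure \<Rightarrow> ('s \<Rightarrow> 'a \<Rightarrow> ennreal) \<Rightarrow> ('s \<Rightarrow> 'z \<Rightarrow> real)
   \<Rightarrow> ('z \<Rightarrow> 'a \<Rightarrow> 'z \<Rightarrow> real) \<Rightarrow> ('s \<Rightarrow> 'a \<Rightarrow> real) \<Rightarrow> real \<Rightarrow> nat \<Rightarrow> bool" where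
  "L_finite q Q e m r \<gamma> k \<longleftrightarrow>
     (AE \<omega> in q. (\<forall>t<k. 0 < r (trS \<omega> t) (trA \<omega> t)
                      \<and> 0 < e (trS \<omega> (Suc t)) (trZ \<omega> (Suc t))
                      \<and> 0 < m (trZ \<omega> t) (trA \<omega> t) (trZ \<omega> (Suc t)))
                 \<and> 0 < Q (trS \<omega> k) (trA \<omega> k) \<and> Q (trS \<omega> k) (trA \<omega> k) < \<infinity>)
     \<and> integrable q (L_integrand Q e m r \<gamma> k)"

definition L_obj ::
  "(nat \<Rightarrow> 's \<times> 'a \<times> 'z) measure \<Rightarrow> ('s \<Rightarrow> 'a \<Rightarrow> ennreal) \<Rightarrow> ('s \<Rightarrow> 'z \<Rightarrow> real)
   \<Rightarrow> ('z \<Rightarrow> 'a \<Rightarrow> 'z \<Rightarrow> real) \<Rightarrow> ('s \<Rightarrow> 'a \<Rightarrow> real) \<Rightarrow> real \<Rightarrow> nat \<Rightarrow> real" where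
  "L_obj q Q e m r \<gamma> k = (\<integral>\<omega>. L_integrand Q e m r \<gamma> k \<omega> \<partial>q)"

end

theory Submission
  imports Defs
begin

lemma key_ineq:
  fixes g R E M A B :: real
  assumes g: "0 \<le> g" "g < 1" and pos: "0 < R" "0 < E" "0 < M" "0 < A" "0 < B"
  shows "(1 - g) * ln R + ln E - ln M + g * ln B - ln A \<le> ((1 - g) * R + g * B) * E / (M * A) - 1"
proof -
  have c: "(1 - g) * ln R + g * ln B \<le> ln ((1 - g) * R + g * B)"
    using ln_concave g pos by (simp add: concave_on_iff)
  have X: "0 < (1 - g) * R + g * B" using g pos by (smt (verit) mult_nonneg_nonneg mult_pos_pos)
  have "ln (((1 - g) * R + g * B) * E / (M * A)) = ln ((1 - g) * R + g * B) + ln E - ln M - ln A"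
    using X pos by (simp add: ln_div ln_mult)
  moreover have "ln (((1 - g) * R + g * B) * E / (M * A)) \<le> ((1 - g) * R + g * B) * E / (M * A) - 1"
    by (rule ln_le_minus_one) (use X pos in simp)
  ultimately show ?thesis using c by linarith
qed

locale mdp =
  fixes Ms :: "'s measure" and Ma :: "'a measure" and Mz :: "'z measure"
    and p0 :: "'s \<Rightarrow> real" and p :: "'s \<Rightarrow> 'a \<Rightarrow> 's \<Rightarrow> real"
    and e :: "'s \<Rightarrow> 'z \<Rightarrow> real" and m :: "'z \<Rightarrow> 'a \<Rightarrow> 'z \<Rightarrow> real"
    and pol :: "'z \<Rightarrow> 'a \<Rightarrow> real" and r :: "'s \<Rightarrow> 'a \<Rightarrow> real"
    and \<gamma> :: real
  assumes sfS: "sigma_finite_measure Ms"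
    and sfA: "sigma_finite_measure Ma"
    and sfZ: "sigma_finite_measure Mz"
    and gamma: "0 \<le> \<gamma>" "\<gamma> < 1"
    and p0_meas: "p0 \<in> borel_measurable Ms"
    and p0_nonneg: "\<And>s. 0 \<le> p0 s"
    and p0_norm: "(\<integral>\<^sup>+ s. ennreal (p0 s) \<partial>Ms) = 1"
    and p_meas: "(\<lambda>(s, a, s'). p s a s') \<in> borel_measurable (Ms \<Otimes>\<^sub>M Ma \<Otimes>\<^sub>M Ms)"
    and p_nonneg: "\<And>s a s'. 0 \<le> p s a s'"
    and p_norm: "\<And>s a. s \<in> space Ms \<Longrightarrow> a \<in> space Ma \<Longrightarrow>
                   (\<integral>\<^sup>+ s'. ennreal (p s a s') \<partial>Ms) = 1"
    and e_meas: "(\<lambda>(s, z). e s z) \<in> borel_measurable (Ms \<Otimes>\<^sub>M Mz)"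
    and e_nonneg: "\<And>s z. 0 \<le> e s z"
    and e_norm: "\<And>s. s \<in> space Ms \<Longrightarrow> (\<integral>\<^sup>+ z. ennreal (e s z) \<partial>Mz) = 1"
    and m_meas: "(\<lambda>(z, a, z'). m z a z') \<in> borel_measurable (Mz \<Otimes>\<^sub>M Ma \<Otimes>\<^sub>M Mz)"
    and m_nonneg: "\<And>z a z'. 0 \<le> m z a z'"
    and m_norm: "\<And>z a. z \<in> space Mz \<Longrightarrow> a \<in> space Ma \<Longrightarrow>
                   (\<integral>\<^sup>+ z'. ennreal (m z a z') \<partial>Mz) = 1"
    and pol_meas: "(\<lambda>(z, a). pol z a) \<in> borel_measurable (Mz \<Otimes>\<^sub>M Ma)"
    and pol_nonneg: "\<And>z a. 0 \<le> pol z a"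
    and pol_norm: "\<And>z. z \<in> space Mz \<Longrightarrow> (\<integral>\<^sup>+ a. ennreal (pol z a) \<partial>Ma) = 1"
    and r_meas: "(\<lambda>(s, a). r s a) \<in> borel_measurable (Ms \<Otimes>\<^sub>M Ma)"
    and r_nonneg: "\<And>s a. 0 \<le> r s a"
begin

abbreviation "M3 \<equiv> Ms \<Otimes>\<^sub>M Ma \<Otimes>\<^sub>M Mz"

lemma sfM3: "sigma_finite_measure M3"
  by (intro sigma_finite_pair_measure sfS sfA sfZ)

sublocale S: sigma_finite_measure Ms by (rule sfS)
sublocale A: sigma_finite_measure Ma by (rule sfA)
sublocale Z: sigma_finite_measure Mz by (rule sfZ)
sublocale P3: product_sigma_finite "\<lambda>_::nat. M3"
  unfolding product_sigma_finite_def using sfM3 by simp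

lemma p_m[measurable (raw)]:
  "f \<in> measurable N Ms \<Longrightarrow> g \<in> measurable N Ma \<Longrightarrow> h \<in> measurable N Ms \<Longrightarrow>
   (\<lambda>x. p (f x) (g x) (h x)) \<in> borel_measurable N"
  using measurable_compose[OF _ p_meas, of "\<lambda>x. (f x, g x, h x)"] by simp
lemma m_m[measurable (raw)]:
  "f \<in> measurable N Mz \<Longrightarrow> g \<in> measurable N Ma \<Longrightarrow> h \<in> measurable N Mz \<Longrightarrow>
   (\<lambda>x. m (f x) (g x) (h x)) \<in> borel_measurable N"
  using measurable_compose[OF _ m_meas, of "\<lambda>x. (f x, g x, h x)"] by simp
lemma e_m[measurable (raw)]:
  "f \<in> measurable N Ms \<Longrightarrow> g \<in> measurable N Mz \<Longrightarrow>
   (\<lambda>x. e (f x) (g x)) \<in> borel_measurable N"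
  using measurable_compose[OF _ e_meas, of "\<lambda>x. (f x, g x)"] by simp
lemma pol_m[measurable (raw)]:
  "f \<in> measurable N Mz \<Longrightarrow> g \<in> measurable N Ma \<Longrightarrow>
   (\<lambda>x. pol (f x) (g x)) \<in> borel_measurable N"
  using measurable_compose[OF _ pol_meas, of "\<lambda>x. (f x, g x)"] by simp
lemma r_m[measurable (raw)]:
  "f \<in> measurable N Ms \<Longrightarrow> g \<in> measurable N Ma \<Longrightarrow>
   (\<lambda>x. r (f x) (g x)) \<in> borel_measurable N"
  using measurable_compose[OF _ r_meas, of "\<lambda>x. (f x, g x)"] by simp
lemma p0_m[measurable (raw)]:
  "f \<in> measurable N Ms \<Longrightarrow> (\<lambda>x. p0 (f x)) \<in> borel_measurable N"
  using measurable_compose[OF _ p0_meas, of f] by simp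

lemma trS_m[measurable]: "t \<in> I \<Longrightarrow> (\<lambda>w. trS w t) \<in> measurable (PiM I (\<lambda>_. M3)) Ms"
  unfolding trS_def by measurable
lemma trA_m[measurable]: "t \<in> I \<Longrightarrow> (\<lambda>w. trA w t) \<in> measurable (PiM I (\<lambda>_. M3)) Ma"
  unfolding trA_def by measurable
lemma trZ_m[measurable]: "t \<in> I \<Longrightarrow> (\<lambda>w. trZ w t) \<in> measurable (PiM I (\<lambda>_. M3)) Mz"
  unfolding trZ_def by measurable

lemmas mrules = p_m m_m e_m pol_m p0_m r_m trS_m trA_m trZ_m

lemma qd_m[measurable]: "q_dens p0 p e m pol k \<in> borel_measurable (PiM {0..k} (\<lambda>_. M3))"
  unfolding q_dens_def
  by (intro borel_measurable_times borel_measurable_prod mrules) auto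

lemma cS_m: "s \<in> space Ms \<Longrightarrow> t \<in> I \<or> t = 0 \<Longrightarrow> (\<lambda>w. cS s w t) \<in> measurable (PiM I (\<lambda>_. M3)) Ms"
  unfolding cS_def by (cases "t = 0") auto
lemma cA_m: "a \<in> space Ma \<Longrightarrow> t \<in> I \<or> t = 0 \<Longrightarrow> (\<lambda>w. cA a w t) \<in> measurable (PiM I (\<lambda>_. M3)) Ma"
  unfolding cA_def by (cases "t = 0") auto

lemma pd_m[measurable]: "s \<in> space Ms \<Longrightarrow> a \<in> space Ma \<Longrightarrow>
   p_cond_dens p e pol s a n \<in> borel_measurable (PiM {1..n} (\<lambda>_. M3))"
  unfolding p_cond_dens_def
  by (intro borel_measurable_times borel_measurable_prod mrules cS_m cA_m) auto


sublocale AZ: sigma_finite_measure "Ma \<Otimes>\<^sub>M Mz" by (intro sigma_finite_pair_measure sfA sfZ)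
sublocale SA: sigma_finite_measure "Ms \<Otimes>\<^sub>M Ma" by (intro sigma_finite_pair_measure sfS sfA)

lemma TI:
  assumes f[measurable]: "f \<in> borel_measurable M3"
  shows "integral\<^sup>N M3 f = (\<integral>\<^sup>+ s. \<integral>\<^sup>+ z. \<integral>\<^sup>+ a. f (s, a, z) \<partial>Ma \<partial>Mz \<partial>Ms)"
proof -
  interpret AZp: pair_sigma_finite Ma Mz by (intro_locales)
  have "integral\<^sup>N M3 f = (\<integral>\<^sup>+ s. \<integral>\<^sup>+ y. f (s, y) \<partial>(Ma \<Otimes>\<^sub>M Mz) \<partial>Ms)"
    by (rule AZ.nn_integral_fst[symmetric]) (rule f)
  also have "\<dots> = (\<integral>\<^sup>+ s. \<integral>\<^sup>+ z. \<integral>\<^sup>+ a. f (s, a, z) \<partial>Ma \<partial>Mz \<partial>Ms)"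
  proof (rule nn_integral_cong)
    fix s assume s: "s \<in> space Ms"
    show "(\<integral>\<^sup>+ y. f (s, y) \<partial>(Ma \<Otimes>\<^sub>M Mz)) = (\<integral>\<^sup>+ z. \<integral>\<^sup>+ a. f (s, a, z) \<partial>Ma \<partial>Mz)"
      by (rule AZp.nn_integral_snd[symmetric]) (use s in measurable)
  qed
  finally show ?thesis .
qed

definition T :: "('s \<Rightarrow> 'a \<Rightarrow> ennreal) \<Rightarrow> 's \<Rightarrow> 'a \<Rightarrow> ennreal" where
  "T h s a = (\<integral>\<^sup>+ s'. ennreal (p s a s') * (\<integral>\<^sup>+ z'. ennreal (e s' z') *
       (\<integral>\<^sup>+ a'. ennreal (pol z' a') * h s' a' \<partial>Ma) \<partial>Mz) \<partial>Ms)"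

lemma h_m: "case_prod h \<in> borel_measurable (Ms \<Otimes>\<^sub>M Ma) \<Longrightarrow> f \<in> measurable N Ms \<Longrightarrow> g \<in> measurable N Ma \<Longrightarrow>
   (\<lambda>x. h (f x) (g x)) \<in> borel_measurable N"
  using measurable_compose[of "\<lambda>x. (f x, g x)" N "Ms \<Otimes>\<^sub>M Ma" "case_prod h"] by simp

lemma T_meas:
  assumes h: "case_prod h \<in> borel_measurable (Ms \<Otimes>\<^sub>M Ma)"
  shows "case_prod (T h) \<in> borel_measurable (Ms \<Otimes>\<^sub>M Ma)"
proof -
  note h_m[OF h, measurable]
  show ?thesis unfolding T_def by measurable
qed


lemma pcd_nonneg: "0 \<le> p_cond_dens p e pol s a n w"
  unfolding p_cond_dens_def by (intro prod_nonneg mult_nonneg_nonneg p_nonneg e_nonneg pol_nonneg)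

lemma pcd_Suc:
  "p_cond_dens p e pol s a (Suc t) (w(Suc t := x)) =
   p_cond_dens p e pol s a t w * (p (cS s w t) (cA a w t) (fst x) * e (fst x) (snd (snd x)) * pol (snd (snd x)) (fst (snd x)))"
proof -
  have "p_cond_dens p e pol s a (Suc t) (w(Suc t := x)) =
    (p (cS s w t) (cA a w t) (fst x) * e (fst x) (snd (snd x)) * pol (snd (snd x)) (fst (snd x))) *
    p_cond_dens p e pol s a t w"
    unfolding p_cond_dens_def
    by (subst prod.nat_ivl_Suc') (auto simp: cS_def cA_def trS_def trA_def trZ_def intro!: prod.cong)
  then show ?thesis by (simp add: mult.commute)
qed

lemma pcond_T:
  assumes s: "s \<in> space Ms" and a: "a \<in> space Ma"
  shows "case_prod h \<in> borel_measurable (Ms \<Otimes>\<^sub>M Ma) \<Longrightarrow>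
    (\<integral>\<^sup>+ w. h (cS s w t) (cA a w t) \<partial>p_cond Ms Ma Mz p e pol s a t) = (T ^^ t) h s a"
proof (induction t arbitrary: h)
  case 0
  have m0: "(\<lambda>w. ennreal (p_cond_dens p e pol s a 0 w)) \<in> borel_measurable (PiM {1..0} (\<lambda>_. M3))"
    using pd_m[OF s a] by measurable
  have e0: "{1..0::nat} = {}" by simp
  have "(\<integral>\<^sup>+ w. h (cS s w 0) (cA a w 0) \<partial>p_cond Ms Ma Mz p e pol s a 0)
     = (\<integral>\<^sup>+ w. ennreal (p_cond_dens p e pol s a 0 w) * h (cS s w 0) (cA a w 0) \<partial>PiM {1..0} (\<lambda>_. M3))"
    unfolding p_cond_def by (rule nn_integral_density[OF m0]) (simp add: cS_def cA_def)
  also have "\<dots> = h s a"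
    unfolding e0 PiM_empty
    by (simp add: p_cond_dens_def cS_def cA_def nn_integral_count_space_finite)
  finally show ?case by simp
next
  case (Suc t)
  note hm[measurable] = h_m[OF Suc.prems]
  note [measurable] = pd_m[OF s a]
  have cSm[measurable]: "(\<lambda>w. cS s w i) \<in> measurable (PiM {1..n} (\<lambda>_. M3)) Ms" if "i \<le> n" for i n
    by (rule cS_m[OF s]) (use that in auto)
  have cAm[measurable]: "(\<lambda>w. cA a w i) \<in> measurable (PiM {1..n} (\<lambda>_. M3)) Ma" if "i \<le> n" for i n
    by (rule cA_m[OF a]) (use that in auto)
  have ins: "{1..Suc t} = insert (Suc t) {1..t}" by auto
  have "(\<integral>\<^sup>+ w. h (cS s w (Suc t)) (cA a w (Suc t)) \<partial>p_cond Ms Ma Mz p e pol s a (Suc t))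
    = (\<integral>\<^sup>+ w. ennreal (p_cond_dens p e pol s a (Suc t) w) * h (cS s w (Suc t)) (cA a w (Suc t)) \<partial>PiM {1..Suc t} (\<lambda>_. M3))"
    unfolding p_cond_def by (rule nn_integral_density) measurable
  also have "\<dots> = (\<integral>\<^sup>+ w. \<integral>\<^sup>+ x. ennreal (p_cond_dens p e pol s a (Suc t) (w(Suc t := x))) * h (fst x) (fst (snd x)) \<partial>M3 \<partial>PiM {1..t} (\<lambda>_. M3))"
  proof -
    have meas: "(\<lambda>w. ennreal (p_cond_dens p e pol s a (Suc t) w) * h (cS s w (Suc t)) (cA a w (Suc t))) \<in> borel_measurable (PiM (insert (Suc t) {1..t}) (\<lambda>_. M3))"
      unfolding ins[symmetric] by measurable
    show ?thesis unfolding ins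
      by (subst P3.product_nn_integral_insert[OF _ _ meas]) (auto simp: cS_def cA_def trS_def trA_def)
  qed
  also have "\<dots> = (\<integral>\<^sup>+ w. ennreal (p_cond_dens p e pol s a t w) * T h (cS s w t) (cA a w t) \<partial>PiM {1..t} (\<lambda>_. M3))"
  proof (rule nn_integral_cong)
    fix w assume w: "w \<in> space (PiM {1..t} (\<lambda>_. M3))"
    have S: "cS s w t \<in> space Ms" and A: "cA a w t \<in> space Ma"
      using measurable_space[OF cSm[of t t] w] measurable_space[OF cAm[of t t] w] by auto
    have "(\<integral>\<^sup>+ x. ennreal (p_cond_dens p e pol s a (Suc t) (w(Suc t := x))) * h (fst x) (fst (snd x)) \<partial>M3)
       = (\<integral>\<^sup>+ x. ennreal (p_cond_dens p e pol s a t w) * (ennreal (p (cS s w t) (cA a w t) (fst x)) * (ennreal (e (fst x) (snd (snd x))) * (ennreal (pol (snd (snd x)) (fst (snd x))) * h (fst x) (fst (snd x))))) \<partial>M3)"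
      by (simp add: pcd_Suc ennreal_mult pcd_nonneg p_nonneg e_nonneg pol_nonneg mult_nonneg_nonneg mult.assoc)
    also have "\<dots> = ennreal (p_cond_dens p e pol s a t w) * (\<integral>\<^sup>+ x. (ennreal (p (cS s w t) (cA a w t) (fst x)) * (ennreal (e (fst x) (snd (snd x))) * (ennreal (pol (snd (snd x)) (fst (snd x))) * h (fst x) (fst (snd x))))) \<partial>M3)"
      by (rule nn_integral_cmult) (use S A in measurable)
    also have "(\<integral>\<^sup>+ x. (ennreal (p (cS s w t) (cA a w t) (fst x)) * (ennreal (e (fst x) (snd (snd x))) * (ennreal (pol (snd (snd x)) (fst (snd x))) * h (fst x) (fst (snd x))))) \<partial>M3)
       = T h (cS s w t) (cA a w t)"
      apply (subst TI)
      apply (use S A in measurable)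
      unfolding T_def fst_conv snd_conv
      apply (rule nn_integral_cong)
      apply (subst nn_integral_cmult[symmetric])
      apply (use S A in measurable)
      apply (rule nn_integral_cong)
      apply (subst nn_integral_cmult[symmetric])
      apply (use S A in measurable)
      apply (subst nn_integral_cmult[symmetric])
      apply (use S A in measurable)
      done
    finally show "(\<integral>\<^sup>+ x. ennreal (p_cond_dens p e pol s a (Suc t) (w(Suc t := x))) * h (fst x) (fst (snd x)) \<partial>M3)
       = ennreal (p_cond_dens p e pol s a t w) * T h (cS s w t) (cA a w t)" .
  qed
  also have "\<dots> = (\<integral>\<^sup>+ w. T h (cS s w t) (cA a w t) \<partial>p_cond Ms Ma Mz p e pol s a t)"
    unfolding p_cond_def
    using h_m[OF T_meas[OF Suc.prems], measurable]
    by (intro nn_integral_density[symmetric]) (use s a in measurable)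
  also have "\<dots> = (T ^^ t) (T h) s a"
    by (rule Suc.IH) (rule T_meas[OF Suc.prems])
  finally show ?case by (simp only: funpow_Suc_right comp_def)
qed


definition rr :: "'s \<Rightarrow> 'a \<Rightarrow> ennreal" where "rr s a = ennreal (r s a)"

lemma rr_meas: "case_prod rr \<in> borel_measurable (Ms \<Otimes>\<^sub>M Ma)"
  unfolding rr_def using r_meas by (simp add: case_prod_beta')

lemma Tn_meas: "case_prod ((T ^^ n) rr) \<in> borel_measurable (Ms \<Otimes>\<^sub>M Ma)"
  by (induction n) (auto intro: T_meas rr_meas)

definition Qser :: "'s \<Rightarrow> 'a \<Rightarrow> ennreal" where
  "Qser s a = ennreal (1 - \<gamma>) * (\<Sum>t. ennreal (\<gamma> ^ t) * (T ^^ t) rr s a)"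

abbreviation "Q \<equiv> Qfun Ms Ma Mz p e pol r \<gamma>"

lemma Q_eq: "s \<in> space Ms \<Longrightarrow> a \<in> space Ma \<Longrightarrow> Q s a = Qser s a"
  unfolding Qfun_def Qser_def
  using pcond_T[OF _ _ rr_meas] by (simp add: rr_def)

lemma Qser_meas: "case_prod Qser \<in> borel_measurable (Ms \<Otimes>\<^sub>M Ma)"
proof -
  note [measurable] = h_m[OF Tn_meas]
  show ?thesis unfolding Qser_def by measurable
qed

lemma Q_meas: "case_prod Q \<in> borel_measurable (Ms \<Otimes>\<^sub>M Ma)"
  using Qser_meas by (rule measurable_cong[THEN iffD1, rotated]) (auto simp: space_pair_measure Q_eq)

lemma T_cong: "s \<in> space Ms \<Longrightarrow> a \<in> space Ma \<Longrightarrow> (\<And>s a. s \<in> space Ms \<Longrightarrow> a \<in> space Ma \<Longrightarrow> h s a = h' s a)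
  \<Longrightarrow> T h s a = T h' s a"
  unfolding T_def
  apply (rule nn_integral_cong)
  apply (rule arg_cong2[where f="(*)"], rule refl)
  apply (rule nn_integral_cong)
  apply (rule arg_cong2[where f="(*)"], rule refl)
  apply (rule nn_integral_cong)
  apply simp
  done

lemma nn_cmult_in:
  assumes "f \<in> borel_measurable M" "k \<in> borel_measurable M"
  shows "(\<integral>\<^sup>+ x. k x * (c * f x) \<partial>M) = c * (\<integral>\<^sup>+ x. k x * f x \<partial>M)"
  by (subst nn_integral_cmult[symmetric]) (use assms in \<open>measurable, simp add: ac_simps\<close>)

lemma nn_suminf_cmult:
  assumes "\<And>i. f i \<in> borel_measurable M" "k \<in> borel_measurable M"
  shows "(\<integral>\<^sup>+ x. k x * (\<Sum>i. c i * f i x) \<partial>M) = (\<Sum>i. c i * (\<integral>\<^sup>+ x. k x * f i x \<partial>M))"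
proof -
  have "(\<integral>\<^sup>+ x. k x * (\<Sum>i. c i * f i x) \<partial>M) = (\<integral>\<^sup>+ x. (\<Sum>i. c i * (k x * f i x)) \<partial>M)"
    by (simp add: ennreal_suminf_cmult[symmetric] ac_simps)
  also have "\<dots> = (\<Sum>i. (\<integral>\<^sup>+ x. c i * (k x * f i x) \<partial>M))"
    by (rule nn_integral_suminf) (use assms in measurable)
  also have "\<dots> = (\<Sum>i. c i * (\<integral>\<^sup>+ x. k x * f i x \<partial>M))"
    by (intro suminf_cong nn_integral_cmult) (use assms in measurable)
  finally show ?thesis .
qed

lemma T_suminf:
  assumes hm: "\<And>i. case_prod (h i) \<in> borel_measurable (Ms \<Otimes>\<^sub>M Ma)" and sa: "s \<in> space Ms" "a \<in> space Ma"
  shows "T (\<lambda>s a. \<Sum>i. c i * h i s a) s a = (\<Sum>i. c i * T (h i) s a)"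
proof -
  note [measurable] = h_m[OF hm]
  have "T (\<lambda>s a. \<Sum>i. c i * h i s a) s a =
     (\<integral>\<^sup>+ s'. ennreal (p s a s') * (\<integral>\<^sup>+ z'. ennreal (e s' z') *
       (\<Sum>i. c i * (\<integral>\<^sup>+ a'. ennreal (pol z' a') * h i s' a' \<partial>Ma)) \<partial>Mz) \<partial>Ms)"
    unfolding T_def
    by (intro nn_integral_cong arg_cong2[where f="(*)"] refl nn_suminf_cmult) measurable
  also have "\<dots> = (\<integral>\<^sup>+ s'. ennreal (p s a s') * (\<Sum>i. c i * (\<integral>\<^sup>+ z'. ennreal (e s' z') *
       (\<integral>\<^sup>+ a'. ennreal (pol z' a') * h i s' a' \<partial>Ma) \<partial>Mz)) \<partial>Ms)"
    by (intro nn_integral_cong arg_cong2[where f="(*)"] refl nn_suminf_cmult) measurable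
  also have "\<dots> = (\<Sum>i. c i * T (h i) s a)"
    unfolding T_def
    by (intro nn_suminf_cmult) (use sa in measurable)
  finally show ?thesis .
qed

lemma T_cmult:
  assumes hm: "case_prod h \<in> borel_measurable (Ms \<Otimes>\<^sub>M Ma)" and sa: "s \<in> space Ms" "a \<in> space Ma"
  shows "T (\<lambda>s a. c * h s a) s a = c * T h s a"
proof -
  note [measurable] = h_m[OF hm]
  have "T (\<lambda>s a. c * h s a) s a =
     (\<integral>\<^sup>+ s'. ennreal (p s a s') * (\<integral>\<^sup>+ z'. ennreal (e s' z') *
       (c * (\<integral>\<^sup>+ a'. ennreal (pol z' a') * h s' a' \<partial>Ma)) \<partial>Mz) \<partial>Ms)"
    unfolding T_def
    by (intro nn_integral_cong arg_cong2[where f="(*)"] refl nn_cmult_in) measurable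
  also have "\<dots> = (\<integral>\<^sup>+ s'. ennreal (p s a s') * (c * (\<integral>\<^sup>+ z'. ennreal (e s' z') *
       (\<integral>\<^sup>+ a'. ennreal (pol z' a') * h s' a' \<partial>Ma) \<partial>Mz)) \<partial>Ms)"
    by (intro nn_integral_cong arg_cong2[where f="(*)"] refl nn_cmult_in) measurable
  also have "\<dots> = c * T h s a"
    unfolding T_def
    by (intro nn_cmult_in) (use sa in measurable)
  finally show ?thesis .
qed

lemma bellman:
  assumes sa: "s \<in> space Ms" "a \<in> space Ma"
  shows "Q s a = ennreal (1 - \<gamma>) * rr s a + ennreal \<gamma> * T Q s a"
proof -
  let ?R = "\<lambda>t. (T ^^ t) rr"
  note [measurable] = h_m[OF Tn_meas]
  have sm: "case_prod (\<lambda>s a. \<Sum>t. ennreal (\<gamma> ^ t) * ?R t s a) \<in> borel_measurable (Ms \<Otimes>\<^sub>M Ma)"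
    by measurable
  have "T Q s a = T Qser s a" by (rule T_cong[OF sa]) (rule Q_eq)
  also have "\<dots> = ennreal (1 - \<gamma>) * T (\<lambda>s a. \<Sum>t. ennreal (\<gamma> ^ t) * ?R t s a) s a"
    unfolding Qser_def by (rule T_cmult[OF sm sa])
  also have "T (\<lambda>s a. \<Sum>t. ennreal (\<gamma> ^ t) * ?R t s a) s a = (\<Sum>t. ennreal (\<gamma> ^ t) * T (?R t) s a)"
    by (rule T_suminf[OF Tn_meas sa])
  also have "\<dots> = (\<Sum>t. ennreal (\<gamma> ^ t) * ?R (Suc t) s a)" by simp
  finally have TQ: "T Q s a = ennreal (1 - \<gamma>) * (\<Sum>t. ennreal (\<gamma> ^ t) * ?R (Suc t) s a)" .
  have split: "(\<Sum>t. ennreal (\<gamma> ^ t) * ?R t s a) = (\<Sum>t. ennreal (\<gamma> ^ Suc t) * ?R (Suc t) s a) + ennreal (\<gamma> ^ 0) * ?R 0 s a"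
    by (rule sums_unique[symmetric], rule sums_Suc, rule summable_sums, rule summableI)
  have "(\<Sum>t. ennreal (\<gamma> ^ Suc t) * ?R (Suc t) s a) = (\<Sum>t. ennreal \<gamma> * (ennreal (\<gamma> ^ t) * ?R (Suc t) s a))"
    using gamma by (intro suminf_cong) (simp add: ennreal_mult mult.assoc)
  also have "\<dots> = ennreal \<gamma> * (\<Sum>t. ennreal (\<gamma> ^ t) * ?R (Suc t) s a)"
    by (rule ennreal_suminf_cmult)
  finally have "Q s a = ennreal (1 - \<gamma>) * (ennreal \<gamma> * (\<Sum>t. ennreal (\<gamma> ^ t) * ?R (Suc t) s a) + rr s a)"
    using Q_eq[OF sa] split unfolding Qser_def by simp
  then show ?thesis unfolding TQ by (simp add: distrib_left ac_simps)
qed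

abbreviation "qq k \<equiv> q_traj Ms Ma Mz p0 p e m pol k"

definition W :: "nat \<Rightarrow> (nat \<Rightarrow> 's \<times> 'a \<times> 'z) \<Rightarrow> 's \<times> 'a \<times> 'z \<Rightarrow> real" where
  "W k w x = p (trS w k) (trA w k) (fst x) * m (trZ w k) (trA w k) (snd (snd x)) * pol (snd (snd x)) (fst (snd x))"

lemma W_nonneg: "0 \<le> W k w x"
  unfolding W_def by (intro mult_nonneg_nonneg p_nonneg m_nonneg pol_nonneg)

lemma qd_nonneg: "0 \<le> q_dens p0 p e m pol k w"
  unfolding q_dens_def by (intro prod_nonneg mult_nonneg_nonneg p_nonneg e_nonneg pol_nonneg p0_nonneg m_nonneg)

lemma qd_Suc: "q_dens p0 p e m pol (Suc k) (w(Suc k := x)) = q_dens p0 p e m pol k w * W k w x"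
proof -
  have "q_dens p0 p e m pol (Suc k) (w(Suc k := x)) = W k w x * q_dens p0 p e m pol k w"
    unfolding q_dens_def W_def
    by (subst prod.nat_ivl_Suc') (auto simp: trS_def trA_def trZ_def ac_simps intro!: prod.cong)
  then show ?thesis by (simp add: mult.commute)
qed

lemma W_meas[measurable]: "k \<in> I \<Longrightarrow> (\<lambda>(w, x). W k w x) \<in> borel_measurable (PiM I (\<lambda>_. M3) \<Otimes>\<^sub>M M3)"
proof -
  assume k: "k \<in> I"
  note [measurable] = trS_m[OF k] trA_m[OF k] trZ_m[OF k]
  show ?thesis unfolding W_def by measurable
qed

lemma CF:
  assumes F[measurable]: "F \<in> borel_measurable (PiM {0..Suc k} (\<lambda>_. M3))"
  shows "integral\<^sup>N (qq (Suc k)) F = (\<integral>\<^sup>+ w. \<integral>\<^sup>+ x. ennreal (W k w x) * F (w(Suc k := x)) \<partial>M3 \<partial>qq k)"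
proof -
  have ins: "{0..Suc k} = insert (Suc k) {0..k}" by auto
  have "integral\<^sup>N (qq (Suc k)) F = (\<integral>\<^sup>+ w. ennreal (q_dens p0 p e m pol (Suc k) w) * F w \<partial>PiM {0..Suc k} (\<lambda>_. M3))"
    unfolding q_traj_def by (rule nn_integral_density) measurable
  also have "\<dots> = (\<integral>\<^sup>+ w. \<integral>\<^sup>+ x. ennreal (q_dens p0 p e m pol (Suc k) (w(Suc k := x))) * F (w(Suc k := x)) \<partial>M3 \<partial>PiM {0..k} (\<lambda>_. M3))"
  proof -
    have meas: "(\<lambda>w. ennreal (q_dens p0 p e m pol (Suc k) w) * F w) \<in> borel_measurable (PiM (insert (Suc k) {0..k}) (\<lambda>_. M3))"
      unfolding ins[symmetric] by measurable
    show ?thesis unfolding ins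
      by (subst P3.product_nn_integral_insert[OF _ _ meas]) auto
  qed
  also have "\<dots> = (\<integral>\<^sup>+ w. ennreal (q_dens p0 p e m pol k w) * (\<integral>\<^sup>+ x. ennreal (W k w x) * F (w(Suc k := x)) \<partial>M3) \<partial>PiM {0..k} (\<lambda>_. M3))"
  proof (rule nn_integral_cong)
    fix w assume w: "w \<in> space (PiM {0..k} (\<lambda>_. M3))"
    have Wm: "(\<lambda>x. W k w x) \<in> borel_measurable M3"
      using measurable_Pair2[OF W_meas w] by simp
    have Fm: "(\<lambda>x. F (w(Suc k := x))) \<in> borel_measurable M3"
      using measurable_Pair2[OF measurable_comp[OF measurable_add_dim F[unfolded ins]] w] by (simp add: comp_def)
    show "(\<integral>\<^sup>+ x. ennreal (q_dens p0 p e m pol (Suc k) (w(Suc k := x))) * F (w(Suc k := x)) \<partial>M3) =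
      ennreal (q_dens p0 p e m pol k w) * (\<integral>\<^sup>+ x. ennreal (W k w x) * F (w(Suc k := x)) \<partial>M3)"
      by (subst nn_integral_cmult[symmetric])
         (use Wm Fm in \<open>measurable, simp add: qd_Suc ennreal_mult qd_nonneg W_nonneg mult.assoc\<close>)
  qed
  also have "\<dots> = (\<integral>\<^sup>+ w. \<integral>\<^sup>+ x. ennreal (W k w x) * F (w(Suc k := x)) \<partial>M3 \<partial>qq k)"
  proof -
    have m2: "(\<lambda>(w, x). ennreal (W k w x) * F (w(Suc k := x))) \<in> borel_measurable (PiM {0..k} (\<lambda>_. M3) \<Otimes>\<^sub>M M3)"
    proof -
      have "(\<lambda>(w, x). F (w(Suc k := x))) \<in> borel_measurable (PiM {0..k} (\<lambda>_. M3) \<Otimes>\<^sub>M M3)"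
        using measurable_comp[OF measurable_add_dim F[unfolded ins]] by (simp add: comp_def case_prod_beta')
      then show ?thesis using W_meas[of k "{0..k}"] by measurable
    qed
    show ?thesis
      unfolding q_traj_def
      by (rule nn_integral_density[symmetric]) (use m2 in measurable)
  qed
  finally show ?thesis .
qed

lemma W_norm:
  assumes w: "w \<in> space (PiM {0..k} (\<lambda>_. M3))"
  shows "(\<integral>\<^sup>+ x. ennreal (W k w x) \<partial>M3) = 1"
proof -
  have wk: "w k \<in> space M3" using w by (auto simp: space_PiM)
  then have S: "trS w k \<in> space Ms" and A: "trA w k \<in> space Ma" and Z: "trZ w k \<in> space Mz"
    by (auto simp: trS_def trA_def trZ_def space_pair_measure)
  have Wm: "(\<lambda>x. ennreal (W k w x)) \<in> borel_measurable M3"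
    using measurable_Pair2[OF W_meas w] by simp
  have "(\<integral>\<^sup>+ x. ennreal (W k w x) \<partial>M3) = (\<integral>\<^sup>+ s. \<integral>\<^sup>+ z. \<integral>\<^sup>+ a. ennreal (W k w (s, a, z)) \<partial>Ma \<partial>Mz \<partial>Ms)"
    by (rule TI[OF Wm])
  also have "\<dots> = (\<integral>\<^sup>+ s. ennreal (p (trS w k) (trA w k) s) * (\<integral>\<^sup>+ z. ennreal (m (trZ w k) (trA w k) z) * (\<integral>\<^sup>+ a. ennreal (pol z a) \<partial>Ma) \<partial>Mz) \<partial>Ms)"
    unfolding W_def fst_conv snd_conv
    apply (rule nn_integral_cong)
    apply (subst nn_integral_cmult[symmetric])
    apply (use S A Z in measurable)
    apply (rule nn_integral_cong)
    apply (subst nn_integral_cmult[symmetric])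
    apply (use S A Z in measurable)
    apply (subst nn_integral_cmult[symmetric])
    apply (use S A Z in measurable)
    apply (rule nn_integral_cong)
    apply (simp add: ennreal_mult p_nonneg m_nonneg pol_nonneg mult_nonneg_nonneg ac_simps)
    done
  also have "\<dots> = (\<integral>\<^sup>+ s. ennreal (p (trS w k) (trA w k) s) \<partial>Ms)"
    apply (rule nn_integral_cong)
    apply (subst nn_integral_cong[where v="\<lambda>z. ennreal (m (trZ w k) (trA w k) z)"])
    apply (simp add: pol_norm)
    apply (simp add: m_norm Z A)
    done
  also have "\<dots> = 1" using p_norm S A by simp
  finally show ?thesis .
qed

lemma restrict_upd_PiE:
  assumes w: "w \<in> space (PiM {0..k} (\<lambda>_. M3))"
  shows "restrict (w(Suc k := x)) {0..k} = w"
  using w by (auto simp: space_PiM PiE_def extensional_def restrict_def fun_eq_iff)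

lemma marg:
  assumes G[measurable]: "G \<in> borel_measurable (PiM {0..k} (\<lambda>_. M3))"
  shows "(\<integral>\<^sup>+ w. G (restrict w {0..k}) \<partial>qq (Suc k)) = integral\<^sup>N (qq k) G"
proof -
  have Rm: "(\<lambda>w. restrict w {0..k}) \<in> measurable (PiM {0..Suc k} (\<lambda>_. M3)) (PiM {0..k} (\<lambda>_. M3))"
    by (rule measurable_restrict_subset) auto
  have "(\<integral>\<^sup>+ w. G (restrict w {0..k}) \<partial>qq (Suc k)) =
      (\<integral>\<^sup>+ w. \<integral>\<^sup>+ x. ennreal (W k w x) * G (restrict (w(Suc k := x)) {0..k}) \<partial>M3 \<partial>qq k)"
    by (rule CF) (use Rm in measurable)
  also have "\<dots> = integral\<^sup>N (qq k) G"
  proof (rule nn_integral_cong)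
    fix w assume "w \<in> space (qq k)"
    then have w: "w \<in> space (PiM {0..k} (\<lambda>_. M3))" by (simp add: q_traj_def)
    have Wm: "(\<lambda>x. ennreal (W k w x)) \<in> borel_measurable M3"
      using measurable_Pair2[OF W_meas w] by simp
    show "(\<integral>\<^sup>+ x. ennreal (W k w x) * G (restrict (w(Suc k := x)) {0..k}) \<partial>M3) = G w"
      unfolding restrict_upd_PiE[OF w]
      by (subst nn_integral_multc[OF Wm]) (simp add: W_norm[OF w])
  qed
  finally show ?thesis .
qed

lemma qq_prob: "prob_space (qq k)"
proof (rule prob_spaceI)
  show "emeasure (qq k) (space (qq k)) = 1"
  proof (induction k)
    case 0
    have e0: "{0..0::nat} = {0}" by auto
    have fm: "(\<lambda>x. ennreal (p0 (fst x) * e (fst x) (snd (snd x)) * pol (snd (snd x)) (fst (snd x)))) \<in> borel_measurable M3"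
      by measurable
    have "emeasure (qq 0) (space (qq 0)) = (\<integral>\<^sup>+ w. 1 \<partial>qq 0)" by simp
    also have "\<dots> = (\<integral>\<^sup>+ w. ennreal (q_dens p0 p e m pol 0 w) \<partial>PiM {0..0} (\<lambda>_. M3))"
    proof -
      have qm: "(\<lambda>w. ennreal (q_dens p0 p e m pol 0 w)) \<in> borel_measurable (PiM {0..0} (\<lambda>_. M3))"
        by measurable
      show ?thesis unfolding q_traj_def by (subst nn_integral_density[OF qm]) auto
    qed
    also have "\<dots> = (\<integral>\<^sup>+ w. ennreal (p0 (fst (w 0)) * e (fst (w 0)) (snd (snd (w 0))) * pol (snd (snd (w 0))) (fst (snd (w 0)))) \<partial>PiM {0::nat} (\<lambda>_. M3))"
      unfolding e0 by (simp add: q_dens_def trS_def trA_def trZ_def)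
    also have "\<dots> = (\<integral>\<^sup>+ x. ennreal (p0 (fst x) * e (fst x) (snd (snd x)) * pol (snd (snd x)) (fst (snd x))) \<partial>M3)"
      by (rule P3.product_nn_integral_singleton[OF fm])
    also have "\<dots> = (\<integral>\<^sup>+ s. \<integral>\<^sup>+ z. \<integral>\<^sup>+ a. ennreal (p0 s) * (ennreal (e s z) * ennreal (pol z a)) \<partial>Ma \<partial>Mz \<partial>Ms)"
      by (subst TI[OF fm]) (simp add: ennreal_mult p0_nonneg e_nonneg pol_nonneg mult_nonneg_nonneg ac_simps)
    also have "\<dots> = (\<integral>\<^sup>+ s. ennreal (p0 s) * (\<integral>\<^sup>+ z. ennreal (e s z) * (\<integral>\<^sup>+ a. ennreal (pol z a) \<partial>Ma) \<partial>Mz) \<partial>Ms)"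
      apply (rule nn_integral_cong)
      apply (subst nn_integral_cmult[symmetric], measurable)
      apply (rule nn_integral_cong)
      apply (subst nn_integral_cmult[symmetric], measurable)+
      done
    also have "\<dots> = (\<integral>\<^sup>+ s. ennreal (p0 s) \<partial>Ms)"
      apply (rule nn_integral_cong)
      apply (subst nn_integral_cong[where v="\<lambda>z. ennreal (e _ z)"])
      apply (simp add: pol_norm)
      apply (simp add: e_norm)
      done
    also have "\<dots> = 1" by (rule p0_norm)
    finally show ?case .
  next
    case (Suc k)
    have "emeasure (qq (Suc k)) (space (qq (Suc k))) = (\<integral>\<^sup>+ w. (\<lambda>_. 1) (restrict w {0..k}) \<partial>qq (Suc k))" by simp
    also have "\<dots> = (\<integral>\<^sup>+ w. 1 \<partial>qq k)" by (rule marg) simp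
    also have "\<dots> = 1" using Suc by simp
    finally show ?case .
  qed
qed

lemma T_add:
  assumes h1: "case_prod h1 \<in> borel_measurable (Ms \<Otimes>\<^sub>M Ma)" and h2: "case_prod h2 \<in> borel_measurable (Ms \<Otimes>\<^sub>M Ma)"
    and sa: "s \<in> space Ms" "a \<in> space Ma"
  shows "T (\<lambda>s a. h1 s a + h2 s a) s a = T h1 s a + T h2 s a"
proof -
  have "T (\<lambda>s a. h1 s a + h2 s a) s a = T (\<lambda>s a. \<Sum>i. (1::ennreal) * (\<lambda>i::nat. if i = 0 then h1 else if i = 1 then h2 else (\<lambda>_ _. 0)) i s a) s a"
  proof (rule T_cong[OF sa])
    fix s a
    have "(\<Sum>i. (1::ennreal) * (\<lambda>i::nat. if i = 0 then h1 else if i = 1 then h2 else (\<lambda>_ _. 0)) i s a) = (\<Sum>i<2::nat. (\<lambda>i::nat. if i = 0 then h1 else if i = 1 then h2 else (\<lambda>_ _. 0)) i s a)"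
      by (subst suminf_finite[where N="{..<2}"]) auto
    then show "h1 s a + h2 s a = (\<Sum>i. (1::ennreal) * (\<lambda>i::nat. if i = 0 then h1 else if i = 1 then h2 else (\<lambda>_ _. 0)) i s a)"
      by (simp add: numeral_2_eq_2)
  qed
  also have "\<dots> = (\<Sum>i. 1 * T ((\<lambda>i::nat. if i = 0 then h1 else if i = 1 then h2 else (\<lambda>_ _. 0)) i) s a)"
    by (rule T_suminf[OF _ sa]) (use h1 h2 in auto)
  also have "\<dots> = (\<Sum>i<2::nat. T ((\<lambda>i::nat. if i = 0 then h1 else if i = 1 then h2 else (\<lambda>_ _. 0)) i) s a)"
    by (subst suminf_finite[where N="{..<2}"]) (auto simp: T_def)
  also have "\<dots> = T h1 s a + T h2 s a" by (simp add: numeral_2_eq_2)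
  finally show ?thesis .
qed

lemma T_one:
  assumes sa: "s \<in> space Ms" "a \<in> space Ma"
  shows "T (\<lambda>_ _. 1) s a = 1"
  unfolding T_def
  apply (subst nn_integral_cong[where v="\<lambda>s'. ennreal (p s a s')"])
  apply (subst nn_integral_cong[where v="\<lambda>z. ennreal (e _ z)"])
  apply (simp add: pol_norm)
  apply (simp add: e_norm)
  apply (simp add: p_norm sa)
  done

definition AQ :: "nat \<Rightarrow> (nat \<Rightarrow> 's \<times> 'a \<times> 'z) \<Rightarrow> real" where
  "AQ K w = enn2real (Q (trS w K) (trA w K))"

definition U :: "nat \<Rightarrow> (nat \<Rightarrow> 's \<times> 'a \<times> 'z) \<Rightarrow> real" where
  "U K w = (if 0 < m (trZ w K) (trA w K) (trZ w (Suc K)) \<and> 0 < AQ K w then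
     ((1 - \<gamma>) * r (trS w K) (trA w K) + \<gamma> * enn2real (Q (trS w (Suc K)) (trA w (Suc K))))
      * e (trS w (Suc K)) (trZ w (Suc K)) / (m (trZ w K) (trA w K) (trZ w (Suc K)) * AQ K w) else 0)"

lemma U_nonneg: "0 \<le> U K w"
  unfolding U_def using gamma
  by (auto intro!: divide_nonneg_pos mult_nonneg_nonneg add_nonneg_nonneg r_nonneg e_nonneg simp: AQ_def)

lemma Q_m: "f \<in> measurable N Ms \<Longrightarrow> g \<in> measurable N Ma \<Longrightarrow> (\<lambda>x. Q (f x) (g x)) \<in> borel_measurable N"
  by (rule h_m[OF Q_meas])

lemma U_meas: "U K \<in> borel_measurable (PiM {0..Suc K} (\<lambda>_. M3))"
proof -
  have k: "K \<in> {0..Suc K}" "Suc K \<in> {0..Suc K}" by auto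
  note [measurable] = trS_m[OF k(1)] trA_m[OF k(1)] trZ_m[OF k(1)] trS_m[OF k(2)] trA_m[OF k(2)] trZ_m[OF k(2)]
    Q_m
  show ?thesis unfolding U_def AQ_def by measurable
qed

lemma inner_U:
  assumes w: "w \<in> space (PiM {0..K} (\<lambda>_. M3))"
  shows "(\<integral>\<^sup>+ x. ennreal (W K w x) * ennreal (U K (w(Suc K := x))) \<partial>M3) \<le> 1"
proof -
  define s where "s = trS w K"
  define a where "a = trA w K"
  define z where "z = trZ w K"
  have wk: "w K \<in> space M3" using w by (auto simp: space_PiM)
  then have S: "s \<in> space Ms" and A: "a \<in> space Ma" and Z: "z \<in> space Mz"
    by (auto simp: s_def a_def z_def trS_def trA_def trZ_def space_pair_measure)
  have upd: "trS (w(Suc K := x)) K = s" "trA (w(Suc K := x)) K = a" "trZ (w(Suc K := x)) K = z"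
     "trS (w(Suc K := x)) (Suc K) = fst x" "trA (w(Suc K := x)) (Suc K) = fst (snd x)" "trZ (w(Suc K := x)) (Suc K) = snd (snd x)"
     "AQ K (w(Suc K := x)) = AQ K w" for x
    by (auto simp: s_def a_def z_def trS_def trA_def trZ_def AQ_def)
  have Wd: "W K w x = p s a (fst x) * m z a (snd (snd x)) * pol (snd (snd x)) (fst (snd x))" for x
    by (simp add: W_def s_def a_def z_def)
  show ?thesis
  proof (cases "0 < AQ K w")
    case False
    then show ?thesis by (simp add: U_def upd)
  next
    case True
    define Aw where "Aw = AQ K w"
    have Apos: "0 < Aw" using True by (simp add: Aw_def)
    have QA: "Q s a = ennreal Aw"
      using Apos unfolding Aw_def AQ_def s_def a_def
      by (cases "Q (trS w K) (trA w K)") (auto simp: enn2real_positive_iff)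
    define H where "H s' a' = ennreal (1 / Aw) * (ennreal ((1 - \<gamma>) * r s a) * 1 + ennreal \<gamma> * Q s' a')" for s' a'
    have Hm: "case_prod H \<in> borel_measurable (Ms \<Otimes>\<^sub>M Ma)"
      unfolding H_def using Q_m by measurable
    note [measurable] = h_m[OF Hm]
    have pw: "ennreal (W K w x) * ennreal (U K (w(Suc K := x))) \<le>
       ennreal (p s a (fst x)) * (ennreal (e (fst x) (snd (snd x))) * (ennreal (pol (snd (snd x)) (fst (snd x))) * H (fst x) (fst (snd x))))" for x
    proof (cases "0 < m z a (snd (snd x))")
      case False
      then show ?thesis by (simp add: U_def upd)
    next
      case mpos: True
      define B where "B = enn2real (Q (fst x) (fst (snd x)))"
      have B0: "0 \<le> B" by (simp add: B_def)
      have r0: "0 \<le> (1 - \<gamma>) * r s a" using gamma r_nonneg by simp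
      have eq: "W K w x * U K (w(Suc K := x)) = p s a (fst x) * (e (fst x) (snd (snd x)) * (pol (snd (snd x)) (fst (snd x)) * ((1 / Aw) * ((1 - \<gamma>) * r s a + \<gamma> * B))))"
        using mpos Apos unfolding U_def upd Wd B_def Aw_def[symmetric] by (simp add: field_simps)
      have "ennreal (W K w x) * ennreal (U K (w(Suc K := x))) = ennreal (W K w x * U K (w(Suc K := x)))"
        by (simp add: ennreal_mult W_nonneg U_nonneg)
      also have "\<dots> = ennreal (p s a (fst x)) * (ennreal (e (fst x) (snd (snd x))) * (ennreal (pol (snd (snd x)) (fst (snd x))) * (ennreal (1 / Aw) * (ennreal ((1 - \<gamma>) * r s a) + ennreal \<gamma> * ennreal B))))"
      proof -
        have c0: "0 \<le> 1 / Aw" using Apos by simp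
        show ?thesis unfolding eq
          by (simp only: ennreal_mult[symmetric] ennreal_plus[symmetric] mult_nonneg_nonneg add_nonneg_nonneg
            p_nonneg e_nonneg pol_nonneg gamma(1) B0 r0 c0)
      qed
      also have "\<dots> \<le> ennreal (p s a (fst x)) * (ennreal (e (fst x) (snd (snd x))) * (ennreal (pol (snd (snd x)) (fst (snd x))) * H (fst x) (fst (snd x))))"
        unfolding H_def B_def
        by (intro mult_left_mono add_left_mono order_refl) (auto simp: ennreal_enn2real_if)
      finally show ?thesis .
    qed
    have "(\<integral>\<^sup>+ x. ennreal (W K w x) * ennreal (U K (w(Suc K := x))) \<partial>M3) \<le>
       (\<integral>\<^sup>+ x. ennreal (p s a (fst x)) * (ennreal (e (fst x) (snd (snd x))) * (ennreal (pol (snd (snd x)) (fst (snd x))) * H (fst x) (fst (snd x)))) \<partial>M3)"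
      by (intro nn_integral_mono pw)
    also have "\<dots> = T H s a"
      apply (subst TI)
      apply (use S A in measurable)
      unfolding T_def fst_conv snd_conv
      apply (rule nn_integral_cong)
      apply (subst nn_integral_cmult[symmetric])
      apply (use S A in measurable)
      apply (rule nn_integral_cong)
      apply (subst nn_integral_cmult[symmetric])
      apply (use S A in measurable)
      apply (subst nn_integral_cmult[symmetric])
      apply (use S A in measurable)
      done
    also have "\<dots> = ennreal (1 / Aw) * T (\<lambda>s' a'. ennreal ((1 - \<gamma>) * r s a) * 1 + ennreal \<gamma> * Q s' a') s a"
      unfolding H_def by (rule T_cmult[OF _ S A]) (use Q_m in measurable)
    also have "T (\<lambda>s' a'. ennreal ((1 - \<gamma>) * r s a) * 1 + ennreal \<gamma> * Q s' a') s a
        = T (\<lambda>s' a'. ennreal ((1 - \<gamma>) * r s a) * 1) s a + T (\<lambda>s' a'. ennreal \<gamma> * Q s' a') s a"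
      by (rule T_add[OF _ _ S A]) (use Q_m in measurable)
    also have "T (\<lambda>s' a'. ennreal ((1 - \<gamma>) * r s a) * 1) s a = ennreal ((1 - \<gamma>) * r s a)"
      by (subst T_cmult[OF _ S A]) (auto simp: T_one[OF S A])
    also have "T (\<lambda>s' a'. ennreal \<gamma> * Q s' a') s a = ennreal \<gamma> * T Q s a"
      by (rule T_cmult[OF Q_meas S A])
    also have "ennreal ((1 - \<gamma>) * r s a) + ennreal \<gamma> * T Q s a = Q s a"
      using bellman[OF S A] gamma r_nonneg by (simp add: rr_def ennreal_mult)
    also have "ennreal (1 / Aw) * Q s a = 1"
      unfolding QA using Apos by (simp add: ennreal_mult[symmetric])
    finally show ?thesis .
  qed
qed

lemma U_int: "(\<integral>\<^sup>+ w. ennreal (U K w) \<partial>qq (Suc K)) \<le> 1"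
proof -
  have "(\<integral>\<^sup>+ w. ennreal (U K w) \<partial>qq (Suc K)) = (\<integral>\<^sup>+ w. \<integral>\<^sup>+ x. ennreal (W K w x) * ennreal (U K (w(Suc K := x))) \<partial>M3 \<partial>qq K)"
    by (rule CF) (use U_meas in measurable)
  also have "\<dots> \<le> (\<integral>\<^sup>+ w. 1 \<partial>qq K)"
    by (rule nn_integral_mono) (rule inner_U, simp add: q_traj_def)
  also have "\<dots> = 1" using prob_space.emeasure_space_1[OF qq_prob[of K]] by simp
  finally show ?thesis .
qed

lemma sets_qq: "sets (qq k) = sets (PiM {0..k} (\<lambda>_. M3))" and space_qq: "space (qq k) = space (PiM {0..k} (\<lambda>_. M3))"
  by (simp_all add: q_traj_def)

lemma Rm: "(\<lambda>w. restrict w {0..k}) \<in> measurable (PiM {0..Suc k} (\<lambda>_. M3)) (PiM {0..k} (\<lambda>_. M3))"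
  by (rule measurable_restrict_subset) auto

lemma AE_marg:
  assumes "AE w in qq k. P w"
  shows "AE w in qq (Suc k). P (restrict w {0..k})"
proof -
  from assms obtain N where N: "{w \<in> space (qq k). \<not> P w} \<subseteq> N" "emeasure (qq k) N = 0" "N \<in> sets (qq k)"
    by (rule AE_E)
  have Ns: "N \<in> sets (PiM {0..k} (\<lambda>_. M3))" using N(3) by (simp add: sets_qq)
  have "(\<integral>\<^sup>+ w. indicator N (restrict w {0..k}) \<partial>qq (Suc k)) = (\<integral>\<^sup>+ w. indicator N w \<partial>qq k)"
    by (rule marg) (use Ns in measurable)
  also have "\<dots> = 0" using N(2,3) by simp
  finally have "AE w in qq (Suc k). (indicator N (restrict w {0..k}) :: ennreal) = 0"
  proof (subst (asm) nn_integral_0_iff_AE)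
    have idm: "(\<lambda>x. x) \<in> measurable (qq (Suc k)) (PiM {0..Suc k} (\<lambda>_. M3))"
      by (rule measurable_ident_sets) (simp add: sets_qq)
    show "(\<lambda>w. indicator N (restrict w {0..k}) :: ennreal) \<in> borel_measurable (qq (Suc k))"
      using measurable_comp[OF measurable_comp[OF idm Rm] borel_measurable_indicator[OF Ns]]
      by (simp add: comp_def)
  qed
  then show ?thesis
  proof (rule AE_mp[OF _ AE_I2], intro impI)
    fix w assume w: "w \<in> space (qq (Suc k))" and i: "(indicator N (restrict w {0..k}) :: ennreal) = 0"
    have "restrict w {0..k} \<in> space (qq k)"
      using measurable_space[OF Rm, of w k] w by (simp add: space_qq)
    then show "P (restrict w {0..k})" using i N(1) by (auto simp: indicator_def split: if_splits)
  qed
qed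

lemma marg_integral:
  fixes G :: "_ \<Rightarrow> real"
  assumes G: "integrable (qq k) G"
  shows "integrable (qq (Suc k)) (\<lambda>w. G (restrict w {0..k}))"
    and "(\<integral>w. G (restrict w {0..k}) \<partial>qq (Suc k)) = integral\<^sup>L (qq k) G"
proof -
  have Gm[measurable]: "G \<in> borel_measurable (PiM {0..k} (\<lambda>_. M3))"
    using borel_measurable_integrable[OF G] by (simp add: measurable_cong_sets[OF sets_qq refl])
  have GRm: "(\<lambda>w. G (restrict w {0..k})) \<in> borel_measurable (qq (Suc k))"
    using Rm[of k] by (simp add: measurable_cong_sets[OF sets_qq refl])
  have n: "(\<integral>\<^sup>+ w. ennreal (norm (G (restrict w {0..k}))) \<partial>qq (Suc k)) = (\<integral>\<^sup>+ w. ennreal (norm (G w)) \<partial>qq k)"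
    by (rule marg) measurable
  show I: "integrable (qq (Suc k)) (\<lambda>w. G (restrict w {0..k}))"
    unfolding integrable_iff_bounded using GRm n G[unfolded integrable_iff_bounded] by simp
  have p: "(\<integral>\<^sup>+ w. ennreal (G (restrict w {0..k})) \<partial>qq (Suc k)) = (\<integral>\<^sup>+ w. ennreal (G w) \<partial>qq k)"
    by (rule marg) measurable
  have m: "(\<integral>\<^sup>+ w. ennreal (- G (restrict w {0..k})) \<partial>qq (Suc k)) = (\<integral>\<^sup>+ w. ennreal (- G w) \<partial>qq k)"
    by (rule marg) measurable
  show "(\<integral>w. G (restrict w {0..k}) \<partial>qq (Suc k)) = integral\<^sup>L (qq k) G"
    unfolding real_lebesgue_integral_def[OF I] real_lebesgue_integral_def[OF G] p m ..
qed

theorem main: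
  assumes finK: "L_finite (qq K) Q e m r \<gamma> K"
    and finK1: "L_finite (qq (Suc K)) Q e m r \<gamma> (Suc K)"
  shows "L_obj (qq K) Q e m r \<gamma> K \<ge> L_obj (qq (Suc K)) Q e m r \<gamma> (Suc K)"
proof -
  let ?f = "L_integrand Q e m r \<gamma> K"
  let ?g = "L_integrand Q e m r \<gamma> (Suc K)"
  interpret q1: prob_space "qq (Suc K)" by (rule qq_prob)
  have AE0: "AE w in qq K. 0 < Q (trS w K) (trA w K) \<and> Q (trS w K) (trA w K) < \<infinity>"
    and intf: "integrable (qq K) ?f"
    using finK unfolding L_finite_def by (auto elim!: eventually_mono)
  have AE1: "AE w in qq (Suc K). (\<forall>t<Suc K. 0 < r (trS w t) (trA w t)
                      \<and> 0 < e (trS w (Suc t)) (trZ w (Suc t))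
                      \<and> 0 < m (trZ w t) (trA w t) (trZ w (Suc t)))
                 \<and> 0 < Q (trS w (Suc K)) (trA w (Suc K)) \<and> Q (trS w (Suc K)) (trA w (Suc K)) < \<infinity>"
    and intg: "integrable (qq (Suc K)) ?g"
    using finK1 unfolding L_finite_def by auto
  have AE0': "AE w in qq (Suc K). 0 < Q (trS w K) (trA w K) \<and> Q (trS w K) (trA w K) < \<infinity>"
    using AE_marg[OF AE0] by (simp add: trS_def trA_def)
  have fr: "?f (restrict w {0..K}) = ?f w" for w
    unfolding L_integrand_def trS_def trA_def trZ_def
    by (intro arg_cong2[where f="(+)"] sum.cong refl) auto
  have intf1: "integrable (qq (Suc K)) ?f" and If: "integral\<^sup>L (qq (Suc K)) ?f = integral\<^sup>L (qq K) ?f"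
    using marg_integral[OF intf] unfolding fr by auto
  have Um: "U K \<in> borel_measurable (qq (Suc K))"
    using U_meas by (simp add: measurable_cong_sets[OF sets_qq refl])
  have intU: "integrable (qq (Suc K)) (U K)"
    unfolding integrable_iff_bounded using Um U_int[of K] U_nonneg
    by (auto simp: order_le_less_trans[OF U_int] ennreal_one_less_top)
  have IU: "integral\<^sup>L (qq (Suc K)) (U K) \<le> 1"
  proof -
    have "integral\<^sup>L (qq (Suc K)) (U K) = enn2real (\<integral>\<^sup>+ w. ennreal (U K w) \<partial>qq (Suc K))"
      by (rule integral_eq_nn_integral) (use Um U_nonneg in auto)
    also have "\<dots> \<le> enn2real 1" by (rule enn2real_mono[OF U_int]) simp
    finally show ?thesis by simp
  qed
  have pw: "AE w in qq (Suc K). ?g w \<le> ?f w + \<gamma> ^ K * (U K w - 1)"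
    using AE1 AE0'
  proof eventually_elim
    case (elim w)
    define R where "R = r (trS w K) (trA w K)"
    define E where "E = e (trS w (Suc K)) (trZ w (Suc K))"
    define Mm where "Mm = m (trZ w K) (trA w K) (trZ w (Suc K))"
    define A where "A = AQ K w"
    define B where "B = enn2real (Q (trS w (Suc K)) (trA w (Suc K)))"
    have pos: "0 < R" "0 < E" "0 < Mm" "0 < A" "0 < B"
      using elim unfolding R_def E_def Mm_def A_def AQ_def B_def
      by (auto simp: enn2real_positive_iff)
    have Ueq: "U K w = ((1 - \<gamma>) * R + \<gamma> * B) * E / (Mm * A)"
      using pos unfolding U_def R_def E_def Mm_def A_def B_def by simp
    have geq: "?g w = ?f w + \<gamma> ^ K * ((1 - \<gamma>) * ln R + ln E - ln Mm + \<gamma> * ln B - ln A)"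
      unfolding L_integrand_def R_def E_def Mm_def A_def B_def AQ_def
      by (simp add: algebra_simps)
    have "(1 - \<gamma>) * ln R + ln E - ln Mm + \<gamma> * ln B - ln A \<le> U K w - 1"
      unfolding Ueq by (rule key_ineq[OF gamma pos])
    then have "\<gamma> ^ K * ((1 - \<gamma>) * ln R + ln E - ln Mm + \<gamma> * ln B - ln A) \<le> \<gamma> ^ K * (U K w - 1)"
      by (rule mult_left_mono) (use gamma in simp)
    then show ?case unfolding geq by simp
  qed
  have "L_obj (qq (Suc K)) Q e m r \<gamma> (Suc K) = integral\<^sup>L (qq (Suc K)) ?g"
    by (simp add: L_obj_def)
  also have "\<dots> \<le> (\<integral>w. ?f w + \<gamma> ^ K * (U K w - 1) \<partial>qq (Suc K))"
    by (rule integral_mono_AE[OF intg _ pw]) (use intf1 intU in auto)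
  also have "\<dots> = integral\<^sup>L (qq (Suc K)) ?f + \<gamma> ^ K * (integral\<^sup>L (qq (Suc K)) (U K) - 1)"
    using intf1 intU by (simp add: q1.prob_space)
  also have "\<dots> \<le> integral\<^sup>L (qq (Suc K)) ?f"
    using IU gamma by (simp add: mult_nonneg_nonpos)
  also have "\<dots> = L_obj (qq K) Q e m r \<gamma> K" by (simp add: If L_obj_def)
  finally show ?thesis .
qed

end

theorem mainTheorem3:
  fixes Ms :: "'s measure" and Ma :: "'a measure" and Mz :: "'z measure"
    and p0 :: "'s \<Rightarrow> real" and p :: "'s \<Rightarrow> 'a \<Rightarrow> 's \<Rightarrow> real"
    and e :: "'s \<Rightarrow> 'z \<Rightarrow> real" and m :: "'z \<Rightarrow> 'a \<Rightarrow> 'z \<Rightarrow> real"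
    and pol :: "'z \<Rightarrow> 'a \<Rightarrow> real" and r :: "'s \<Rightarrow> 'a \<Rightarrow> real"
    and \<gamma> :: real and K :: nat
  assumes sfS: "sigma_finite_measure Ms"
    and sfA: "sigma_finite_measure Ma"
    and sfZ: "sigma_finite_measure Mz"
    and gamma: "0 \<le> \<gamma>" "\<gamma> < 1"
    and p0_meas: "p0 \<in> borel_measurable Ms"
    and p0_nonneg: "\<And>s. 0 \<le> p0 s"
    and p0_norm: "(\<integral>\<^sup>+ s. ennreal (p0 s) \<partial>Ms) = 1"
    and p_meas: "(\<lambda>(s, a, s'). p s a s') \<in> borel_measurable (Ms \<Otimes>\<^sub>M Ma \<Otimes>\<^sub>M Ms)"
    and p_nonneg: "\<And>s a s'. 0 \<le> p s a s'"
    and p_norm: "\<And>s a. s \<in> space Ms \<Longrightarrow> a \<in> space Ma \<Longrightarrow>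
                   (\<integral>\<^sup>+ s'. ennreal (p s a s') \<partial>Ms) = 1"
    and e_meas: "(\<lambda>(s, z). e s z) \<in> borel_measurable (Ms \<Otimes>\<^sub>M Mz)"
    and e_nonneg: "\<And>s z. 0 \<le> e s z"
    and e_norm: "\<And>s. s \<in> space Ms \<Longrightarrow> (\<integral>\<^sup>+ z. ennreal (e s z) \<partial>Mz) = 1"
    and m_meas: "(\<lambda>(z, a, z'). m z a z') \<in> borel_measurable (Mz \<Otimes>\<^sub>M Ma \<Otimes>\<^sub>M Mz)"
    and m_nonneg: "\<And>z a z'. 0 \<le> m z a z'"
    and m_norm: "\<And>z a. z \<in> space Mz \<Longrightarrow> a \<in> space Ma \<Longrightarrow>
                   (\<integral>\<^sup>+ z'. ennreal (m z a z') \<partial>Mz) = 1"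
    and pol_meas: "(\<lambda>(z, a). pol z a) \<in> borel_measurable (Mz \<Otimes>\<^sub>M Ma)"
    and pol_nonneg: "\<And>z a. 0 \<le> pol z a"
    and pol_norm: "\<And>z. z \<in> space Mz \<Longrightarrow> (\<integral>\<^sup>+ a. ennreal (pol z a) \<partial>Ma) = 1"
    and r_meas: "(\<lambda>(s, a). r s a) \<in> borel_measurable (Ms \<Otimes>\<^sub>M Ma)"
    and r_nonneg: "\<And>s a. 0 \<le> r s a"
    and finK: "L_finite (q_traj Ms Ma Mz p0 p e m pol K) (Qfun Ms Ma Mz p e pol r \<gamma>)
                        e m r \<gamma> K"
    and finK1: "L_finite (q_traj Ms Ma Mz p0 p e m pol (Suc K)) (Qfun Ms Ma Mz p e pol r \<gamma>)
                        e m r \<gamma> (Suc K)"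
  shows "L_obj (q_traj Ms Ma Mz p0 p e m pol K) (Qfun Ms Ma Mz p e pol r \<gamma>) e m r \<gamma> K
         \<ge> L_obj (q_traj Ms Ma Mz p0 p e m pol (Suc K)) (Qfun Ms Ma Mz p e pol r \<gamma>)
               e m r \<gamma> (Suc K)"
proof -
  interpret X: mdp Ms Ma Mz p0 p e m pol r \<gamma>
    by (rule mdp.intro) (fact assms)+
  show ?thesis by (rule X.main[OF finK finK1])
qed

end
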